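(* Let $\mathbb{F}\in\{\mathbb{R},\mathbb{C}\}$ and $m\le n\le 2m$. For the $m\times n\times 2$ tensor $$X=\Big((E_m,O);\begin{pmatrix}O&E_{\lfloor n/2\rfloor}\\ O&O\end{pmatrix}\Big)$$ (the second slice being the $m\times n$ matrix with an identity block $E_{\lfloor n/2\rfloor}$ in its top-right corner and zeros elsewhere), one has $\mathrm{rank}_{\mathbb{F}}(X)=m+\lfloor n/2\rfloor$.
   Context: $E_k$ is the $k\times k$ identity, $(E_m,O)$ is the $m\times n$ matrix obtained by concatenating $E_m$ with a zero $m\times(n-m)$ block. $(A;B)$ denotes the tensor with slices $A,B$. A rank-one tensor has the form $(\alpha\,\mathbf{a}\mathbf{b}^T;\beta\,\mathbf{a}\mathbf{b}^T)$ with nonzero $\mathbf{a},\mathbf{b}$, $(\alpha,\beta)\ne0$; $\mathrm{rank}_{\mathbb{F}}$ is the minimal number of rank-one tensors over $\mathbb{F}$ summing slicewise to the tensor. *)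

theory Defs
  imports Complex_Main
begin

text \<open>Matrices are represented as functions nat => nat => 'a, only entries with
  row index < m and column index < n are relevant. An m x n x 2 tensor is a pair
  of slices (A;B).\<close>

definition tensor_rank2 :: "nat \<Rightarrow> nat \<Rightarrow> (nat \<Rightarrow> nat \<Rightarrow> 'a::field) \<Rightarrow> (nat \<Rightarrow> nat \<Rightarrow> 'a) \<Rightarrow> nat" where
  "tensor_rank2 m n A B = (LEAST r. \<exists>(\<alpha>::nat \<Rightarrow> 'a) (\<beta>::nat \<Rightarrow> 'a) (a::nat \<Rightarrow> nat \<Rightarrow> 'a) (b::nat \<Rightarrow> nat \<Rightarrow> 'a).
      (\<forall>k<r. (\<exists>i<m. a k i \<noteq> 0) \<and> (\<exists>j<n. b k j \<noteq> 0) \<and> (\<alpha> k, \<beta> k) \<noteq> (0, 0)) \<and>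
      (\<forall>i<m. \<forall>j<n. A i j = (\<Sum>k<r. \<alpha> k * a k i * b k j) \<and>
                     B i j = (\<Sum>k<r. \<beta> k * a k i * b k j)))"

definition slice1 :: "nat \<Rightarrow> nat \<Rightarrow> 'a::field" where
  "slice1 i j = (if i = j then 1 else 0)"

definition slice2 :: "nat \<Rightarrow> nat \<Rightarrow> nat \<Rightarrow> 'a::field" where
  "slice2 n i j = (if i < n div 2 \<and> j = (n - n div 2) + i then 1 else 0)"

end

theory Submission
  imports Defs "HOL-Library.Function_Algebras"
begin

definition fsc :: "'a::field \<Rightarrow> ('b \<Rightarrow> 'a) \<Rightarrow> ('b \<Rightarrow> 'a)" where
  "fsc c f = (\<lambda>x. c * f x)"

lemma fsc_apply: "fsc c f x = c * f x" by (simp add: fsc_def)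

interpretation fv: vector_space "fsc :: 'a::field \<Rightarrow> ('b \<Rightarrow> 'a) \<Rightarrow> ('b \<Rightarrow> 'a)"
  by unfold_locales (auto simp: fun_eq_iff algebra_simps fsc_def)

lemma sum_fun_apply: "(\<Sum>l\<in>S. f l) x = (\<Sum>l\<in>S. f l x)"
  by (induction S rule: infinite_finite_induct) auto

lemma span_coord_zero:
  assumes "\<forall>v\<in>S. v p = 0" "x \<in> fv.span S"
  shows "x p = (0::'a::field)"
proof -
  have "fv.subspace {f :: 'b \<Rightarrow> 'a. f p = 0}"
    by (auto simp: fv.subspace_def fsc_def)
  then have "fv.span S \<subseteq> {f. f p = 0}" using assms(1) by (intro fv.span_minimal) auto
  then show ?thesis using assms(2) by auto
qed

lemma indep_insert_coord:
  assumes "fv.independent S" "\<forall>v\<in>S. v p = 0" "v p \<noteq> (0::'a::field)"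
  shows "fv.independent (insert v S)"
proof (rule fv.independent_insertI)
  show "v \<notin> fv.span S" using span_coord_zero[OF assms(2)] assms(3) by blast
qed fact

definition mk :: "(nat \<Rightarrow> 'a) \<Rightarrow> (nat \<Rightarrow> 'a) \<Rightarrow> bool \<times> nat \<Rightarrow> 'a" where
  "mk x y = (\<lambda>(s,i). if s then x i else y i)"

lemma mk_apply[simp]: "mk x y (True,i) = x i" "mk x y (False,i) = y i"
  by (auto simp: mk_def)

lemma mk_eq_iff: "mk x y = mk x' y' \<longleftrightarrow> x = x' \<and> y = y'"
  by (auto simp: fun_eq_iff mk_def fsc_def)

lemma mk_add: "mk x y + mk x' y' = mk (x + x') (y + y')"
  by (auto simp: fun_eq_iff mk_def fsc_def)
lemma mk_diff: "mk x y - mk x' y' = mk (x - x') (y - y')"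
  by (auto simp: fun_eq_iff mk_def fsc_def)
lemma mk_fsc: "fsc c (mk x y) = mk (fsc c x) (fsc c y)"
  by (auto simp: fun_eq_iff mk_def fsc_def)
lemma mk_zero: "mk 0 0 = 0"
  by (auto simp: fun_eq_iff mk_def fsc_def)

lemma mk0_hom: "module_hom (fsc :: 'a::field \<Rightarrow> _) fsc (mk 0)"
  unfolding module_hom_iff
  by (auto simp: fv.module_axioms mk_add mk_fsc)

definition ev :: "nat \<Rightarrow> nat \<Rightarrow> 'a::field" where
  "ev i = (\<lambda>x. if x = i then 1 else 0)"

definition Zf :: "nat \<Rightarrow> nat \<Rightarrow> (nat \<Rightarrow> 'a::field) \<Rightarrow> nat \<Rightarrow> 'a" where
  "Zf m c f = (\<lambda>i. if i + c < m then f (i + c) else 0)"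

lemma Zf_hom: "module_hom (fsc :: 'a::field \<Rightarrow> _) fsc (Zf m c)"
  unfolding module_hom_iff
  by (auto simp: fv.module_axioms fun_eq_iff Zf_def fsc_def)

lemma ev_indep: "fv.independent ((ev :: nat \<Rightarrow> nat \<Rightarrow> 'a::field) ` {..<q})"
proof (induction q)
  case 0 then show ?case by (simp add: fv.independent_empty)
next
  case (Suc q)
  have "(ev :: nat \<Rightarrow> nat \<Rightarrow> 'a) ` {..<Suc q} = insert (ev q) (ev ` {..<q})" by (auto simp: lessThan_Suc)
  moreover have "fv.independent (insert (ev q :: nat \<Rightarrow> 'a) (ev ` {..<q}))"
    by (rule indep_insert_coord[where p=q]) (use Suc in \<open>auto simp: ev_def\<close>)
  ultimately show ?case by simp
qed

lemma ev_card: "card ((ev :: nat \<Rightarrow> nat \<Rightarrow> 'a::field) ` {..<q}) = q"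
proof -
  have "inj_on (ev :: nat \<Rightarrow> nat \<Rightarrow> 'a) {..<q}"
    by (auto simp: inj_on_def ev_def fun_eq_iff)
  then show ?thesis by (simp add: card_image)
qed

lemma mult_if01: "(x::'a::semiring_1) * (if P then 1 else 0) = (if P then x else 0)"
  by simp

lemma lower_bound:
  fixes \<alpha> \<beta> :: "nat \<Rightarrow> 'a::field" and a b :: "nat \<Rightarrow> nat \<Rightarrow> 'a"
  assumes mn: "m \<le> n" "n \<le> 2*m"
   and dec: "\<forall>i<m. \<forall>j<n. slice1 i j = (\<Sum>l<r. \<alpha> l * a l i * b l j) \<and>
                     slice2 n i j = (\<Sum>l<r. \<beta> l * a l i * b l j)"
  shows "m + n div 2 \<le> r"
proof -
  define k where "k = n div 2"
  define c where "c = n - k"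
  have ck: "c \<le> m" "k \<le> c" "m \<le> c + c" unfolding c_def k_def using mn by auto
  have nck: "n = c + k" unfolding c_def k_def by simp
  have s2: "slice2 n i j = (if i < k \<and> j = c + i then 1 else 0)" for i j
    unfolding slice2_def k_def c_def by simp
  define av where "av l = (\<lambda>i. if i < m then a l i else 0)" for l
  define g where "g l = mk (fsc (\<alpha> l) (av l)) (fsc (\<beta> l) (av l))" for l
  define col where "col j = mk (\<lambda>i. if i<m then slice1 i j else 0)
      (\<lambda>i. if i<m then slice2 n i j else (0::'a))" for j
  define U where "U = fv.span (g ` {..<r})"
  define W where "W = {y. mk 0 y \<in> U}"
  define Z where "Z = (Zf m c :: (nat \<Rightarrow> 'a) \<Rightarrow> _)"
  have colU: "col j \<in> U" if "j<n" for j
  proof -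
    have "col j = (\<Sum>l<r. fsc (b l j) (g l))"
    proof (rule ext)
      fix p :: "bool \<times> nat"
      obtain s i where p: "p = (s,i)" by fastforce
      show "col j p = (\<Sum>l<r. fsc (b l j) (g l)) p"
        using dec that unfolding p sum_fun_apply
        by (cases s; cases "i<m") (auto simp: col_def g_def av_def fsc_def mult_ac)
    qed
    then show ?thesis unfolding U_def by (auto intro!: fv.span_sum fv.span_scale intro: fv.span_base)
  qed
  have col_lo: "col j = mk (ev j) (Z (ev j))" if "j<m" for j
    using that ck mn(1)[unfolded nck] by (auto simp: fun_eq_iff col_def mk_def Z_def Zf_def ev_def slice1_def s2)
  have col_hi: "col j = mk 0 (ev (j - c))" if "m \<le> j" "j < n" for j
  proof -
    have "j < c + k" using that nck by simp
    then show ?thesis using that(1) ck by (auto simp: fun_eq_iff col_def mk_def ev_def slice1_def s2)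
  qed
  have Wsub: "fv.subspace W"
    unfolding W_def fv.subspace_def
  proof (intro conjI ballI allI)
    show "0 \<in> {y. mk 0 y \<in> U}" unfolding U_def by (simp add: mk_zero fv.span_zero)
  next
    fix x y assume "x \<in> {y. mk 0 y \<in> U}" "y \<in> {y. mk 0 y \<in> U}"
    then show "x + y \<in> {y. mk 0 y \<in> U}" using mk_add[of 0 x 0 y] unfolding U_def
      by (auto dest: fv.span_add)
  next
    fix cc x assume "x \<in> {y. mk 0 y \<in> U}"
    then have "fsc cc (mk 0 x) \<in> U" unfolding U_def by (simp add: fv.span_scale)
    moreover have "fsc cc (mk 0 x) = mk 0 (fsc cc x)"
      by (auto simp: fun_eq_iff fsc_def mk_def)
    ultimately show "fsc cc x \<in> {y. mk 0 y \<in> U}" by simp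
  qed
  have EW: "ev i \<in> W" if "m - c \<le> i" "i < k" for i
    using colU[of "i + c"] col_hi[of "i+c"] that ck nck unfolding W_def by auto
  have ZZ: "Z (Z x) = 0" for x
    using ck by (auto simp: fun_eq_iff Z_def Zf_def)
  have Zev: "Z (ev j) = ev (j - c)" if "c \<le> j" "j < m" for j
    using that by (auto simp: fun_eq_iff Z_def Zf_def ev_def)
  have Zev0: "Z (ev i) = 0" if "i < c" for i
    using that by (auto simp: fun_eq_iff Z_def Zf_def ev_def)
  have Zlin: "Z (x + y) = Z x + Z y" "Z (fsc t x) = fsc t (Z x)" "Z (x - y) = Z x - Z y" for x y t
    by (auto simp: fun_eq_iff Z_def Zf_def fsc_def)
  have keyW: "fsc (\<beta> l / \<alpha> l) (av l) - Z (av l) \<in> W" if "l<r" "\<alpha> l \<noteq> 0" for l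
  proof -
    have "mk (av l) (Z (av l)) = (\<Sum>j<m. fsc (a l j) (col j))"
    proof -
      have "(\<Sum>j<m. fsc (a l j) (col j)) = (\<Sum>j<m. fsc (a l j) (mk (ev j) (Z (ev j))))"
        by (rule sum.cong) (auto simp: col_lo)
      also have "\<dots> = mk (av l) (Z (av l))"
      proof (rule ext)
        fix p :: "bool \<times> nat"
        obtain s i where p: "p = (s,i)" by fastforce
        show "(\<Sum>j<m. fsc (a l j) (mk (ev j) (Z (ev j)))) p = mk (av l) (Z (av l)) p"
          unfolding p sum_fun_apply
          by (cases s) (auto simp: fsc_def ev_def Z_def Zf_def av_def mult_if01)
      qed
      finally show ?thesis by simp
    qed
    moreover have "\<forall>j<m. col j \<in> fv.span (g ` {..<r})" using colU mn(1) U_def by auto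
    ultimately have 1: "mk (av l) (Z (av l)) \<in> U"
      unfolding U_def by (auto intro!: fv.span_sum fv.span_scale)
    have 2: "fsc (1 / \<alpha> l) (g l) \<in> U" unfolding U_def using that
      by (intro fv.span_scale fv.span_base) auto
    have "fsc (1 / \<alpha> l) (g l) = mk (av l) (fsc (\<beta> l / \<alpha> l) (av l))"
      using that(2) by (auto simp: fun_eq_iff g_def mk_def fsc_def)
    with 1 2 have "mk (av l) (fsc (\<beta> l / \<alpha> l) (av l)) - mk (av l) (Z (av l)) \<in> U"
      unfolding U_def by (metis fv.span_diff)
    then show ?thesis unfolding W_def mk_diff by simp
  qed
  have evspan: "ev j \<in> fv.span (av ` {l. l<r \<and> \<alpha> l \<noteq> 0})" if "j<m" for j
  proof -
    have "ev j = (\<Sum>l<r. fsc (\<alpha> l * b l j) (av l))"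
    proof (rule ext)
      fix i
      show "ev j i = (\<Sum>l<r. fsc (\<alpha> l * b l j) (av l)) i"
        using dec that mn unfolding sum_fun_apply
        by (cases "i<m") (auto simp: ev_def av_def fsc_def slice1_def mult_ac)
    qed
    moreover have *: "fsc (\<alpha> l * b l j) (av l) \<in> fv.span (av ` {l. l<r \<and> \<alpha> l \<noteq> 0})" if "l<r" for l
    proof (cases "\<alpha> l = 0")
      case True
      then have "fsc (\<alpha> l * b l j) (av l) = 0" by (auto simp: fun_eq_iff fsc_def)
      then show ?thesis by (metis fv.span_zero)
    next
      case False
      then show ?thesis using that by (intro fv.span_scale fv.span_base) auto
    qed
    moreover have "(\<Sum>l<r. fsc (\<alpha> l * b l j) (av l)) \<in> fv.span (av ` {l. l<r \<and> \<alpha> l \<noteq> 0})"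
      by (rule fv.span_sum) (use * in simp)
    ultimately show ?thesis by simp
  qed
  obtain B0 where B0: "B0 \<subseteq> W \<inter> {x. Z x = 0}" "fv.independent B0" "W \<inter> {x. Z x = 0} \<subseteq> fv.span B0"
    by (rule fv.maximal_independent_subset)
  obtain Bw where Bw: "B0 \<subseteq> Bw" "Bw \<subseteq> W" "fv.independent Bw" "W \<subseteq> fv.span Bw"
    by (rule fv.maximal_independent_subset_extend[of B0 W]) (use B0 in auto)
  define T where "T = col ` {..<m} \<union> mk 0 ` Bw"
  have indM: "fv.independent (mk 0 ` Bw)"
    by (rule module_hom.independent_inj_image[OF mk0_hom Bw(3)]) (auto simp: inj_def mk_eq_iff)
  have M0: "\<forall>v\<in>mk 0 ` Bw. v (True, p) = 0" for p by auto
  have indq: "fv.independent (col ` {..<q} \<union> mk 0 ` Bw)" if "q \<le> m" for q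
    using that
  proof (induction q)
    case 0 then show ?case using indM by (metis lessThan_0 image_empty Un_empty_left)
  next
    case (Suc q)
    have "col ` {..<Suc q} \<union> mk 0 ` Bw = insert (col q) (col ` {..<q} \<union> mk 0 ` Bw)"
      by (auto simp: lessThan_Suc)
    moreover have "fv.independent (insert (col q) (col ` {..<q} \<union> mk 0 ` Bw))"
    proof (rule indep_insert_coord[where p="(True,q)"])
      show "fv.independent (col ` {..<q} \<union> mk 0 ` Bw)" using Suc.IH Suc.prems by (metis Suc_leD)
      show "\<forall>v\<in>col ` {..<q} \<union> mk 0 ` Bw. v (True, q) = 0"
        by (auto simp: col_def slice1_def)
      show "col q (True, q) \<noteq> 0" using Suc by (simp add: col_def slice1_def)
    qed
    ultimately show ?case by metis
  qed
  have indT: "fv.independent T" unfolding T_def using indq by simp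
  have TU: "T \<subseteq> fv.span (g ` {..<r})"
    unfolding T_def using colU mn(1) Bw(2) unfolding U_def W_def by auto
  have bnd: "finite T \<and> card T \<le> card (g ` {..<r})"
    by (rule fv.independent_span_bound[OF _ indT TU]) simp
  have finBw: "finite Bw"
  proof -
    have "finite (mk 0 ` Bw)" using bnd unfolding T_def by simp
    then show ?thesis by (rule finite_imageD) (auto simp: inj_on_def mk_eq_iff)
  qed
  have cardT: "card T = m + card Bw"
  proof -
    have "inj_on col {..<m}"
    proof (rule inj_onI)
      fix x y assume "x \<in> {..<m}" "y \<in> {..<m}" "col x = col y"
      then have "col x (True, x) = col y (True, x)" by simp
      with \<open>x \<in> {..<m}\<close> show "x = y" by (auto simp: col_def slice1_def split: if_splits)
    qed
    then have c1: "card (col ` {..<m}) = m" by (simp add: card_image)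
    have c2: "card (mk 0 ` Bw) = card Bw" by (rule card_image) (auto simp: inj_on_def mk_eq_iff)
    have dj: "col ` {..<m} \<inter> mk 0 ` Bw = {}"
    proof (rule ccontr)
      assume "col ` {..<m} \<inter> mk 0 ` Bw \<noteq> {}"
      then obtain j w where "j < m" "col j = mk 0 w" by auto
      then have "col j (True, j) = mk 0 w (True, j)" by simp
      with \<open>j<m\<close> show False by (simp add: col_def slice1_def)
    qed
    show ?thesis unfolding T_def using c1 c2 dj finBw
      by (subst card_Un_disjoint) auto
  qed
  have mBw: "m + card Bw \<le> r"
    using bnd cardT card_image_le[of "{..<r}" g] by simp
  define B1 where "B1 = Bw - B0"
  define Sp where "Sp = fv.span (B0 \<union> Z ` B1)"
  have WK: "x \<in> Sp" if "x \<in> W" "Z x = 0" for x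
    using that B0(3) fv.span_mono[of B0 "B0 \<union> Z ` B1"] unfolding Sp_def by auto
  have ZBw: "Z ` Bw \<subseteq> Sp"
  proof
    fix y assume "y \<in> Z ` Bw"
    then obtain w where w: "w \<in> Bw" "y = Z w" by auto
    show "y \<in> Sp"
    proof (cases "w \<in> B0")
      case True
      then have "y = 0" using B0(1) w by auto
      then show ?thesis unfolding Sp_def by (metis fv.span_zero)
    next
      case False
      then show ?thesis using w unfolding Sp_def B1_def by (intro fv.span_base) auto
    qed
  qed
  have ZW: "Z x \<in> Sp" if "x \<in> W" for x
  proof -
    have "Z ` W \<subseteq> fv.span (Z ` Bw)"
      using module_hom.spans_image[OF Zf_hom Bw(4)] unfolding Z_def .
    moreover have "fv.span (Z ` Bw) \<subseteq> Sp"
      using ZBw unfolding Sp_def by (intro fv.span_minimal) auto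
    ultimately show ?thesis using that by auto
  qed
  have Zav: "Z (av l) \<in> Sp" if "l<r" "\<alpha> l \<noteq> 0" for l
  proof -
    define t where "t = \<beta> l / \<alpha> l"
    define u where "u = fsc t (av l) - Z (av l)"
    have uW: "u \<in> W" using keyW[OF that] unfolding u_def t_def .
    show ?thesis
    proof (cases "t = 0")
      case True
      then have "Z (av l) = - u" unfolding u_def by (auto simp: fun_eq_iff fsc_def)
      moreover have "- u \<in> W" using uW Wsub by (metis fv.subspace_neg)
      moreover have "Z (- u) = 0" using ZZ \<open>Z (av l) = - u\<close> by metis
      ultimately show ?thesis using WK by metis
    next
      case False
      have "Z u = fsc t (Z (av l))" unfolding u_def using ZZ Zlin by simp
      then have "Z (av l) = fsc (1/t) (Z u)" using False by (auto simp: fun_eq_iff fsc_def)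
      then show ?thesis using ZW[OF uW] unfolding Sp_def by (metis fv.span_scale)
    qed
  qed
  have evSp: "ev i \<in> Sp" if "i<k" for i
  proof (cases "i + c < m")
    case True
    have "ev (i + c) \<in> fv.span (av ` {l. l<r \<and> \<alpha> l \<noteq> 0})" using evspan True by simp
    then have "Z (ev (i+c)) \<in> fv.span (Z ` av ` {l. l<r \<and> \<alpha> l \<noteq> 0})"
      using module_hom.spans_image[OF Zf_hom, of "{ev (i+c)}"] unfolding Z_def by auto
    moreover have "fv.span (Z ` av ` {l. l<r \<and> \<alpha> l \<noteq> 0}) \<subseteq> Sp"
      using Zav unfolding Sp_def by (intro fv.span_minimal) auto
    moreover have "Z (ev (i+c)) = ev i" using Zev[of "i+c"] True by simp
    ultimately show ?thesis by auto
  next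
    case False
    then have "ev i \<in> W" using EW that by simp
    moreover have "Z (ev i) = 0" using Zev0 that ck by simp
    ultimately show ?thesis using WK by blast
  qed
  have finS: "finite (B0 \<union> Z ` B1)" using finBw Bw(1) unfolding B1_def by (auto intro: finite_subset)
  have "finite ((ev :: nat \<Rightarrow> nat \<Rightarrow> 'a) ` {..<k}) \<and> card ((ev :: nat \<Rightarrow> nat \<Rightarrow> 'a) ` {..<k}) \<le> card (B0 \<union> Z ` B1)"
   proof (rule fv.independent_span_bound[OF finS])
     show "fv.independent ((ev :: nat \<Rightarrow> nat \<Rightarrow> 'a) ` {..<k})" by (rule ev_indep)
     show "(ev :: nat \<Rightarrow> nat \<Rightarrow> 'a) ` {..<k} \<subseteq> fv.span (B0 \<union> Z ` B1)"
       using evSp unfolding Sp_def by auto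
   qed
  then have "k \<le> card (B0 \<union> Z ` B1)" by (simp add: ev_card)
  also have "\<dots> \<le> card B0 + card (Z ` B1)" by (rule card_Un_le)
  also have "\<dots> \<le> card B0 + card B1" using finBw unfolding B1_def by (auto intro: card_image_le)
  also have "\<dots> = card Bw" using finBw Bw(1) unfolding B1_def
    by (metis card_Diff_subset finite_subset card_mono le_add_diff_inverse)
  finally show ?thesis using mBw unfolding k_def by simp
qed

lemma rank_eq:
  assumes mn: "m \<le> n" "n \<le> 2*m"
  shows "tensor_rank2 m n (slice1 :: nat \<Rightarrow> nat \<Rightarrow> 'a::field) (slice2 n) = m + n div 2"
  unfolding tensor_rank2_def
proof (rule Least_equality)
  define k where "k = n div 2"
  define c where "c = n - k"
  have ck: "c \<le> m" "k \<le> c" "m \<le> c + c" "n = c + k" unfolding c_def k_def using mn by auto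
  have s2: "slice2 n i j = (if i < k \<and> j = c + i then 1 else 0)" for i j
    unfolding slice2_def k_def c_def by simp
  define \<alpha> where "\<alpha> l = (if l < m then 1 else (0::'a))" for l
  define \<beta> where "\<beta> l = (if l < m then 0 else (1::'a))" for l
  define a where "a l i = (if l < m then (if i = l then 1 else 0) else (if i = l - m then 1 else (0::'a)))" for l i
  define b where "b l j = (if l < m then (if j = l then 1 else 0) else (if j = c + (l - m) then 1 else (0::'a)))" for l j
  show "\<exists>(\<alpha>::nat \<Rightarrow> 'a) (\<beta>::nat \<Rightarrow> 'a) (a::nat \<Rightarrow> nat \<Rightarrow> 'a) (b::nat \<Rightarrow> nat \<Rightarrow> 'a).
      (\<forall>k<m + n div 2. (\<exists>i<m. a k i \<noteq> 0) \<and> (\<exists>j<n. b k j \<noteq> 0) \<and> (\<alpha> k, \<beta> k) \<noteq> (0, 0)) \<and>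
      (\<forall>i<m. \<forall>j<n. slice1 i j = (\<Sum>k<m + n div 2. \<alpha> k * a k i * b k j) \<and>
                     slice2 n i j = (\<Sum>k<m + n div 2. \<beta> k * a k i * b k j))"
  proof (rule exI[of _ \<alpha>], rule exI[of _ \<beta>], rule exI[of _ a], rule exI[of _ b], intro conjI allI impI)
    fix l assume l: "l < m + n div 2"
    show "\<exists>i<m. a l i \<noteq> 0"
    proof (cases "l < m")
      case True then show ?thesis by (intro exI[of _ l]) (simp add: a_def)
    next
      case False then show ?thesis using l ck unfolding k_def[symmetric]
        by (intro exI[of _ "l - m"]) (auto simp: a_def)
    qed
    show "\<exists>j<n. b l j \<noteq> 0"
    proof (cases "l < m")
      case True then show ?thesis using mn by (intro exI[of _ l]) (simp add: b_def)
    next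
      case False then show ?thesis using l ck unfolding k_def[symmetric]
        by (intro exI[of _ "c + (l - m)"]) (auto simp: b_def)
    qed
    show "(\<alpha> l, \<beta> l) \<noteq> (0, 0)" by (simp add: \<alpha>_def \<beta>_def)
  next
    fix i j assume i: "i < m" and j: "j < n"
    have "(\<Sum>l<m + n div 2. \<alpha> l * a l i * b l j) = (\<Sum>l<m + n div 2. if l = i then (if j = i then 1 else 0) else 0)"
      by (rule sum.cong) (use i in \<open>auto simp: \<alpha>_def a_def b_def\<close>)
    also have "\<dots> = slice1 i j" using i by (simp add: slice1_def)
    finally show "slice1 i j = (\<Sum>l<m + n div 2. \<alpha> l * a l i * b l j)" by simp
  next
    fix i j assume i: "i < m" and j: "j < n"
    have "(\<Sum>l<m + n div 2. \<beta> l * a l i * b l j) = (\<Sum>l<m + n div 2. if l = m + i then (if j = c + i then 1 else 0) else 0)"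
      by (rule sum.cong) (use i in \<open>auto simp: \<beta>_def a_def b_def\<close>)
    also have "\<dots> = slice2 n i j" unfolding s2 k_def by simp
    finally show "slice2 n i j = (\<Sum>l<m + n div 2. \<beta> l * a l i * b l j)" by simp
  qed
next
  fix r assume "\<exists>(\<alpha>::nat \<Rightarrow> 'a) (\<beta>::nat \<Rightarrow> 'a) (a::nat \<Rightarrow> nat \<Rightarrow> 'a) (b::nat \<Rightarrow> nat \<Rightarrow> 'a).
      (\<forall>k<r. (\<exists>i<m. a k i \<noteq> 0) \<and> (\<exists>j<n. b k j \<noteq> 0) \<and> (\<alpha> k, \<beta> k) \<noteq> (0, 0)) \<and>
      (\<forall>i<m. \<forall>j<n. slice1 i j = (\<Sum>k<r. \<alpha> k * a k i * b k j) \<and>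
                     slice2 n i j = (\<Sum>k<r. \<beta> k * a k i * b k j))"
  then obtain \<alpha> \<beta> :: "nat \<Rightarrow> 'a" and a b :: "nat \<Rightarrow> nat \<Rightarrow> 'a" where
    "\<forall>i<m. \<forall>j<n. slice1 i j = (\<Sum>k<r. \<alpha> k * a k i * b k j) \<and>
                     slice2 n i j = (\<Sum>k<r. \<beta> k * a k i * b k j)" by blast
  then show "m + n div 2 \<le> r" by (rule lower_bound[OF mn])
qed

theorem mainTheorem8:
  fixes m n :: nat
  assumes "m \<le> n" and "n \<le> 2 * m"
  shows "tensor_rank2 m n (slice1 :: nat \<Rightarrow> nat \<Rightarrow> real) (slice2 n) = m + n div 2 \<and>
         tensor_rank2 m n (slice1 :: nat \<Rightarrow> nat \<Rightarrow> complex) (slice2 n) = m + n div 2"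
  using rank_eq[OF assms, where 'a=real] rank_eq[OF assms, where 'a=complex] by blast

end
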